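(* If a digraph $H$ has tree duality, then its arc graph $\delta H$ also has tree duality.
   Context: Digraphs are finite, $G=(V,A)$ with $A\subseteq V\times V$; homomorphisms are arc-preserving vertex maps. A set $\mathcal F$ of digraphs is a complete set of obstructions for $H$ if for every digraph $G$: $G\to H$ iff no $F\in\mathcal F$ admits a homomorphism to $G$. $H$ has tree duality if it has a complete set of obstructions consisting of oriented trees (digraphs whose underlying undirected graph is a tree). The arc graph of $G=(V,A)$ is $\delta G=(A,\delta A)$ with $\delta A=\{((u,v),(v,w)) : (u,v),(v,w)\in A\}$. *)

theory Defs
  imports Main
begin

type_synonym 'a digraph = "'a set \<times> ('a \<times> 'a) set"

definition verts :: "'a digraph \<Rightarrow> 'a set" where "verts G = fst G"
definition arcs :: "'a digraph \<Rightarrow> ('a \<times> 'a) set" where "arcs G = snd G"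

definition digraph :: "'a digraph \<Rightarrow> bool" where
  "digraph G \<longleftrightarrow> finite (verts G) \<and> arcs G \<subseteq> verts G \<times> verts G"

definition is_hom :: "('a \<Rightarrow> 'b) \<Rightarrow> 'a digraph \<Rightarrow> 'b digraph \<Rightarrow> bool" where
  "is_hom f G H \<longleftrightarrow> (\<forall>v\<in>verts G. f v \<in> verts H) \<and>
                     (\<forall>u v. (u, v) \<in> arcs G \<longrightarrow> (f u, f v) \<in> arcs H)"

definition hom_to :: "'a digraph \<Rightarrow> 'b digraph \<Rightarrow> bool" (infix "\<rightarrow>\<^sub>h" 50) where
  "G \<rightarrow>\<^sub>h H \<longleftrightarrow> (\<exists>f. is_hom f G H)"

definition oriented_tree :: "'a digraph \<Rightarrow> bool" where
  "oriented_tree T \<longleftrightarrow> digraph T \<and> verts T \<noteq> {} \<and>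
     (\<forall>u v. (u, v) \<in> arcs T \<longrightarrow> u \<noteq> v \<and> (v, u) \<notin> arcs T) \<and>
     (\<forall>u\<in>verts T. \<forall>v\<in>verts T. (u, v) \<in> (arcs T \<union> (arcs T)\<inverse>)\<^sup>*) \<and>
     card (arcs T) + 1 = card (verts T)"

text \<open>Complete set of obstructions. Every finite digraph is isomorphic to one on
  natural-number vertices, so test digraphs and obstructions live on \<open>nat\<close>.\<close>
definition complete_obstructions :: "nat digraph set \<Rightarrow> 'a digraph \<Rightarrow> bool" where
  "complete_obstructions \<F> H \<longleftrightarrow> (\<forall>F\<in>\<F>. digraph F) \<and>
     (\<forall>G :: nat digraph. digraph G \<longrightarrow> (G \<rightarrow>\<^sub>h H \<longleftrightarrow> \<not> (\<exists>F\<in>\<F>. F \<rightarrow>\<^sub>h G)))"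

definition tree_duality :: "'a digraph \<Rightarrow> bool" where
  "tree_duality H \<longleftrightarrow> (\<exists>\<F>. (\<forall>F\<in>\<F>. oriented_tree F) \<and> complete_obstructions \<F> H)"

definition arc_graph :: "'a digraph \<Rightarrow> ('a \<times> 'a) digraph" where
  "arc_graph G = (arcs G, {((u, v), (v', w)). (u, v) \<in> arcs G \<and> (v', w) \<in> arcs G \<and> v' = v})"

end

theory Submission
  imports Defs
begin

datatype tr = Nd "(bool \<times> tr) list"

fun hom_at :: "'b digraph \<Rightarrow> tr \<Rightarrow> 'b \<Rightarrow> bool" where
"hom_at K (Nd cs) x \<longleftrightarrow> x \<in> verts K \<and> (\<forall>c\<in>set cs. \<exists>y. (if fst c then (x,y) else (y,x)) \<in> arcs K \<and> hom_at K (snd c) y)"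

lemma size_nth_tr[termination_simp]: "i < length cs \<Longrightarrow> size (snd (cs!i)) < Suc (size_list (\<lambda>x. Suc (size (snd x))) cs)"
  by (meson less_SucI lessI nth_mem size_list_estimation)

fun tverts :: "tr \<Rightarrow> nat list set" where
"tverts (Nd cs) = insert [] (\<Union>i<length cs. (#) i ` tverts (snd (cs!i)))"

fun tarcs :: "tr \<Rightarrow> (nat list \<times> nat list) set" where
"tarcs (Nd cs) = (\<Union>i<length cs. insert (if fst (cs!i) then ([],[i]) else ([i],[])) ((\<lambda>(a,b). (i#a, i#b)) ` tarcs (snd (cs!i))))"

declare tverts.simps[simp del] tarcs.simps[simp del]

lemma tr_induct: "(\<And>cs. (\<And>i. i < length cs \<Longrightarrow> P (snd (cs!i))) \<Longrightarrow> P (Nd cs)) \<Longrightarrow> P t"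
  by (induction t rule: tverts.induct) auto

definition tdig :: "tr \<Rightarrow> nat list digraph" where "tdig t = (tverts t, tarcs t)"

lemma verts_tdig[simp]: "verts (tdig t) = tverts t" and arcs_tdig[simp]: "arcs (tdig t) = tarcs t"
  by (auto simp: tdig_def verts_def arcs_def)

lemma nil_tverts[simp]: "[] \<in> tverts t"
  by (cases t) (simp add: tverts.simps)

lemma finite_tverts: "finite (tverts t)"
  by (induction t rule: tr_induct) (auto simp: tverts.simps)

lemma tarcs_sub: "tarcs t \<subseteq> tverts t \<times> tverts t"
proof (induction t rule: tr_induct)
  case (1 cs)
  show ?case
  proof
    fix e assume "e \<in> tarcs (Nd cs)"
    then obtain i where i: "i < length cs" and
      e: "e = (if fst (cs!i) then ([],[i]) else ([i],[])) \<or> e \<in> (\<lambda>(a,b). (i#a, i#b)) ` tarcs (snd (cs!i))"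
      by (simp add: tarcs.simps) blast
    have "[i] \<in> tverts (Nd cs)" using i nil_tverts[of "snd (cs!i)"] by (force simp: tverts.simps)
    moreover have "i # a \<in> tverts (Nd cs)" if "a \<in> tverts (snd (cs!i))" for a
      using i that by (force simp: tverts.simps)
    ultimately show "e \<in> tverts (Nd cs) \<times> tverts (Nd cs)"
      using e 1[OF i] by (auto split: if_splits)
  qed
qed

lemma finite_tarcs: "finite (tarcs t)"
  using tarcs_sub[of t] finite_tverts[of t] by (meson finite_SigmaI finite_subset)

lemma tarcs_len: "(u,v) \<in> tarcs t \<Longrightarrow> length v = Suc (length u) \<or> length u = Suc (length v)"
proof (induction t arbitrary: u v rule: tr_induct)
  case (1 cs)
  then show ?case by (fastforce simp: tarcs.simps split: if_splits)
qed

lemma tarcs_anti: "(u,v) \<in> tarcs t \<Longrightarrow> (v,u) \<notin> tarcs t"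
proof (induction t arbitrary: u v rule: tr_induct)
  case (1 cs)
  then show ?case by (auto simp: tarcs.simps split: if_splits)
qed

lemma tarcs_lift: "i < length cs \<Longrightarrow> (a,b) \<in> tarcs (snd (cs!i)) \<Longrightarrow> (i#a, i#b) \<in> tarcs (Nd cs)"
  by (force simp: tarcs.simps)

lemma tarcs_root: "i < length cs \<Longrightarrow> ([],[i]) \<in> tarcs (Nd cs) \<union> (tarcs (Nd cs))\<inverse>"
  by (cases "fst (cs!i)") (force simp: tarcs.simps)+

lemma tconn_root: "p \<in> tverts t \<Longrightarrow> ([],p) \<in> (tarcs t \<union> (tarcs t)\<inverse>)\<^sup>*"
proof (induction t arbitrary: p rule: tr_induct)
  case (1 cs)
  let ?R = "tarcs (Nd cs) \<union> (tarcs (Nd cs))\<inverse>"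
  show ?case
  proof (cases "p = []")
    case False
    then obtain i q where i: "i < length cs" and q: "q \<in> tverts (snd (cs!i))" and p: "p = i#q"
      using 1(2) by (auto simp: tverts.simps)
    have lift: "(i#a, i#b) \<in> ?R\<^sup>*" if "(a,b) \<in> (tarcs (snd (cs!i)) \<union> (tarcs (snd (cs!i)))\<inverse>)\<^sup>*" for a b
      using that
    proof (induction b rule: rtrancl_induct)
      case base then show ?case by simp
    next
      case (step y z)
      then have "(i#y, i#z) \<in> ?R" using tarcs_lift[OF i] by auto
      then show ?case using step(3) by (meson rtrancl.simps)
    qed
    have "([], [i]) \<in> ?R\<^sup>*" using tarcs_root[OF i] by blast
    moreover have "([i], i#q) \<in> ?R\<^sup>*" using lift[OF 1(1)[OF i q]] .
    ultimately show ?thesis using p by (meson rtrancl_trans)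
  qed simp
qed

lemma tconn: "u \<in> tverts t \<Longrightarrow> v \<in> tverts t \<Longrightarrow> (u,v) \<in> (tarcs t \<union> (tarcs t)\<inverse>)\<^sup>*"
proof -
  assume u: "u \<in> tverts t" and v: "v \<in> tverts t"
  let ?R = "tarcs t \<union> (tarcs t)\<inverse>"
  have "(u,[]) \<in> ?R\<^sup>*"
  proof -
    have "([],u) \<in> ?R\<^sup>*" using tconn_root[OF u] .
    then have "(u,[]) \<in> (?R\<inverse>)\<^sup>*" by (simp add: rtrancl_converse)
    moreover have "?R\<inverse> = ?R" by auto
    ultimately show ?thesis by simp
  qed
  then show ?thesis using tconn_root[OF v] by (meson rtrancl_trans)
qed

lemma tcard: "card (tarcs t) + 1 = card (tverts t)"
proof (induction t rule: tr_induct)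
  case (1 cs)
  let ?n = "length cs"
  define V where "V i = (#) i ` tverts (snd (cs!i))" for i
  define S where "S i = (\<lambda>(a,b). (i#a, i#b)) ` tarcs (snd (cs!i))" for i
  define r where "r i = (if fst (cs!i) then ([],[i]) else ([i],[]) :: nat list \<times> nat list)" for i
  have TV: "tverts (Nd cs) = insert [] (\<Union>i<?n. V i)" by (simp add: tverts.simps V_def)
  have TA: "tarcs (Nd cs) = (\<Union>i<?n. insert (r i) (S i))" by (simp add: tarcs.simps S_def r_def)
  have fV: "finite (V i)" for i by (simp add: V_def finite_tverts)
  have fS: "finite (S i)" for i by (simp add: S_def finite_tarcs)
  have cV: "card (V i) = card (tverts (snd (cs!i)))" for i
    unfolding V_def by (rule card_image) (simp add: inj_on_def)
  have cS: "card (S i) = card (tarcs (snd (cs!i)))" for i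
    unfolding S_def by (rule card_image) (auto simp: inj_on_def)
  have rS: "r i \<notin> S i" for i by (auto simp: r_def S_def)
  have "card (\<Union>i<?n. V i) = (\<Sum>i<?n. card (V i))"
    by (rule card_UN_disjoint) (auto simp: V_def finite_tverts)
  then have c1: "card (tverts (Nd cs)) = Suc (\<Sum>i<?n. card (tverts (snd (cs!i))))"
  proof -
    have "[] \<notin> (\<Union>i<?n. V i)" "finite (\<Union>i<?n. V i)" using fV by (auto simp: V_def)
    then show ?thesis using TV \<open>card (\<Union>i<?n. V i) = _\<close> cV by simp
  qed
  have "card (\<Union>i<?n. insert (r i) (S i)) = (\<Sum>i<?n. card (insert (r i) (S i)))"
    by (rule card_UN_disjoint) (auto simp: finite_tarcs r_def S_def split: if_splits)
  then have c2: "card (tarcs (Nd cs)) = (\<Sum>i<?n. Suc (card (tarcs (snd (cs!i)))))"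
    using TA fS rS cS by simp
  have "(\<Sum>i<?n. Suc (card (tarcs (snd (cs!i))))) = (\<Sum>i<?n. card (tverts (snd (cs!i))))"
    by (rule sum.cong) (use 1 in auto)
  then show ?case using c1 c2 by simp
qed

lemma tree_tdig: "oriented_tree (tdig t)"
  unfolding oriented_tree_def digraph_def
  using finite_tverts[of t] tarcs_sub[of t] tcard[of t] tconn[of _ t] tarcs_anti[of _ _ t] tarcs_len[of _ _ t]
  by fastforce

lemma homA: "hom_at K t x \<Longrightarrow> \<exists>f. is_hom f (tdig t) K \<and> f [] = x"
proof (induction t arbitrary: x rule: tr_induct)
  case (1 cs)
  let ?n = "length cs"
  have x: "x \<in> verts K" using 1(2) by simp
  have "\<forall>i. \<exists>f. i < ?n \<longrightarrow> (is_hom f (tdig (snd (cs!i))) K \<and>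
          (if fst (cs!i) then (x, f []) else (f [], x)) \<in> arcs K)"
  proof (intro allI)
    fix i show "\<exists>f. i < ?n \<longrightarrow> (is_hom f (tdig (snd (cs!i))) K \<and>
          (if fst (cs!i) then (x, f []) else (f [], x)) \<in> arcs K)"
    proof (cases "i < ?n")
      case True
      then have "cs!i \<in> set cs" by simp
      then obtain y where y: "(if fst (cs!i) then (x,y) else (y,x)) \<in> arcs K" "hom_at K (snd (cs!i)) y"
        using 1(2) by auto
      obtain f where "is_hom f (tdig (snd (cs!i))) K" "f [] = y" using 1(1)[OF True y(2)] by blast
      then show ?thesis using y(1) by auto
    qed simp
  qed
  then obtain F where F: "\<And>i. i < ?n \<Longrightarrow> is_hom (F i) (tdig (snd (cs!i))) K \<and>
          (if fst (cs!i) then (x, F i []) else (F i [], x)) \<in> arcs K"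
    by metis
  define f where "f p = (case p of [] \<Rightarrow> x | i#q \<Rightarrow> F i q)" for p
  have "is_hom f (tdig (Nd cs)) K"
    unfolding is_hom_def
  proof (intro conjI allI impI ballI)
    fix v assume "v \<in> verts (tdig (Nd cs))"
    then show "f v \<in> verts K" using x F by (auto simp: tverts.simps f_def is_hom_def)
  next
    fix u v assume "(u,v) \<in> arcs (tdig (Nd cs))"
    then obtain i where i: "i < ?n" and
      e: "(u,v) = (if fst (cs!i) then ([],[i]) else ([i],[])) \<or> (u,v) \<in> (\<lambda>(a,b). (i#a, i#b)) ` tarcs (snd (cs!i))"
      by (simp add: tarcs.simps) blast
    show "(f u, f v) \<in> arcs K"
      using e F[OF i] by (auto simp: f_def is_hom_def split: if_splits)
  qed
  then show ?case by (auto simp: f_def)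
qed

lemma homB: "is_hom f (tdig t) K \<Longrightarrow> hom_at K t (f [])"
proof (induction t arbitrary: f rule: tr_induct)
  case (1 cs)
  have "f [] \<in> verts K" using 1(2) by (auto simp: is_hom_def)
  moreover have "\<exists>y. (if fst c then (f [], y) else (y, f [])) \<in> arcs K \<and> hom_at K (snd c) y"
    if c: "c \<in> set cs" for c
  proof -
    obtain i where i: "i < length cs" and ci: "c = cs!i" using c by (auto simp: in_set_conv_nth)
    have "is_hom (f \<circ> (#) i) (tdig (snd (cs!i))) K"
      using 1(2) i unfolding is_hom_def
      by (auto simp: tverts.simps dest: tarcs_lift[OF i])
    then have "hom_at K (snd (cs!i)) (f [i])" using 1(1)[OF i] by fastforce
    moreover have "(if fst c then (f [], f [i]) else (f [i], f [])) \<in> arcs K"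
    proof -
      have "(if fst (cs!i) then ([],[i]) else ([i],[])) \<in> tarcs (Nd cs)"
        using i by (simp add: tarcs.simps) blast
      then show ?thesis using 1(2) ci unfolding is_hom_def by (auto split: if_splits)
    qed
    ultimately show ?thesis using ci by blast
  qed
  ultimately show ?case by simp
qed


definition img :: "('a \<Rightarrow> 'b) \<Rightarrow> 'a digraph \<Rightarrow> 'b digraph" where
  "img h G = (h ` verts G, (\<lambda>(a,b). (h a, h b)) ` arcs G)"

lemma verts_img[simp]: "verts (img h G) = h ` verts G" and arcs_img[simp]: "arcs (img h G) = (\<lambda>(a,b). (h a, h b)) ` arcs G"
  by (auto simp: img_def verts_def arcs_def)

lemma hom_comp: "is_hom f G H \<Longrightarrow> is_hom g H K \<Longrightarrow> is_hom (g \<circ> f) G K"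
  by (auto simp: is_hom_def)

lemma hom_img: "is_hom h G (img h G)"
  by (force simp: is_hom_def)

lemma hom_img_inv: "digraph G \<Longrightarrow> inj_on h (verts G) \<Longrightarrow> is_hom (inv_into (verts G) h) (img h G) G"
  unfolding is_hom_def digraph_def by (auto simp: inv_into_f_f)

lemma digraph_img: "digraph G \<Longrightarrow> digraph (img h G)"
  unfolding digraph_def by auto

lemma hom_refl: "is_hom id G G" by (simp add: is_hom_def)

lemma inj_nat: "finite (A :: 'a set) \<Longrightarrow> \<exists>h :: 'a \<Rightarrow> nat. inj_on h A"
  using finite_imp_inj_to_nat_seg by blast

definition PS :: "'a digraph \<Rightarrow> 'a set digraph" where
"PS H = ({X. X \<subseteq> verts H \<and> X \<noteq> {}}, {(X,Y). X \<subseteq> verts H \<and> X \<noteq> {} \<and> Y \<subseteq> verts H \<and> Y \<noteq> {} \<and>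
     (\<forall>a\<in>X. \<exists>b\<in>Y. (a,b) \<in> arcs H) \<and> (\<forall>b\<in>Y. \<exists>a\<in>X. (a,b) \<in> arcs H)})"

lemma verts_PS: "verts (PS H) = {X. X \<subseteq> verts H \<and> X \<noteq> {}}"
  and arcs_PS: "arcs (PS H) = {(X,Y). X \<subseteq> verts H \<and> X \<noteq> {} \<and> Y \<subseteq> verts H \<and> Y \<noteq> {} \<and>
     (\<forall>a\<in>X. \<exists>b\<in>Y. (a,b) \<in> arcs H) \<and> (\<forall>b\<in>Y. \<exists>a\<in>X. (a,b) \<in> arcs H)}"
  by (auto simp: PS_def verts_def arcs_def)

lemma digraph_PS: "digraph H \<Longrightarrow> digraph (PS H)"
  unfolding digraph_def verts_PS arcs_PS by auto

fun kids :: "tr \<Rightarrow> (bool \<times> tr) list" where "kids (Nd cs) = cs"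

definition glue :: "tr list \<Rightarrow> tr" where "glue ts = Nd (concat (map kids ts))"

lemma hom_at_kids: "hom_at K t x \<longleftrightarrow> x \<in> verts K \<and> (\<forall>c\<in>set (kids t). \<exists>y. (if fst c then (x,y) else (y,x)) \<in> arcs K \<and> hom_at K (snd c) y)"
  by (cases t) simp

lemma hom_at_glue: "hom_at K (glue ts) x \<longleftrightarrow> x \<in> verts K \<and> (\<forall>t\<in>set ts. hom_at K t x)"
proof -
  define P where "P c \<longleftrightarrow> (\<exists>y. (if fst c then (x,y) else (y,x)) \<in> arcs K \<and> hom_at K (snd c) y)" for c
  have e1: "hom_at K (glue ts) x \<longleftrightarrow> x \<in> verts K \<and> (\<forall>t\<in>set ts. \<forall>c\<in>set (kids t). P c)"
    unfolding glue_def hom_at.simps P_def by auto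
  have e2: "hom_at K t x \<longleftrightarrow> x \<in> verts K \<and> (\<forall>c\<in>set (kids t). P c)" for t
    unfolding P_def by (rule hom_at_kids)
  show ?thesis unfolding e1 using e2 by blast
qed


lemma tree_img:
  assumes T: "oriented_tree G" and inj: "inj_on h (verts G)"
  shows "oriented_tree (img h G)"
proof -
  have dg: "digraph G" using T by (simp add: oriented_tree_def)
  then have sub: "arcs G \<subseteq> verts G \<times> verts G" and fin: "finite (verts G)" by (auto simp: digraph_def)
  have Tl: "\<And>u v. (u, v) \<in> arcs G \<Longrightarrow> u \<noteq> v \<and> (v, u) \<notin> arcs G"
    and Tc: "\<And>u v. u \<in> verts G \<Longrightarrow> v \<in> verts G \<Longrightarrow> (u, v) \<in> (arcs G \<union> (arcs G)\<inverse>)\<^sup>*"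
    and Tn: "verts G \<noteq> {}" and Tcard: "card (arcs G) + 1 = card (verts G)"
    using T unfolding oriented_tree_def by blast+
  let ?hh = "\<lambda>(a,b). (h a, h b)"
  have injA: "inj_on ?hh (arcs G)"
  proof (rule inj_onI)
    fix p q assume p: "p \<in> arcs G" and q: "q \<in> arcs G" and e: "?hh p = ?hh q"
    obtain a b c d where pq: "p = (a,b)" "q = (c,d)" by fastforce
    have "h a = h c" "h b = h d" using e pq by simp_all
    moreover have "a \<in> verts G" "b \<in> verts G" "c \<in> verts G" "d \<in> verts G" using p q pq sub by auto
    ultimately have "a = c" "b = d" using inj_onD[OF inj] by metis+
    then show "p = q" using pq by simp
  qed
  have card: "card (arcs (img h G)) + 1 = card (verts (img h G))"
    using Tcard card_image[OF inj] card_image[OF injA] by simp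
  have loops: "\<forall>u v. (u, v) \<in> arcs (img h G) \<longrightarrow> u \<noteq> v \<and> (v, u) \<notin> arcs (img h G)"
  proof (intro allI impI)
    fix u v assume "(u,v) \<in> arcs (img h G)"
    then obtain a b where ab: "(a,b) \<in> arcs G" "u = h a" "v = h b" by auto
    have ne: "a \<noteq> b" and nba: "(b,a) \<notin> arcs G" using Tl[OF ab(1)] by auto
    have av: "a \<in> verts G" "b \<in> verts G" using ab(1) sub by auto
    have "h a \<noteq> h b"
    proof
      assume "h a = h b" then have "a = b" using inj_onD[OF inj _ av] by blast
      then show False using ne by simp
    qed
    moreover have "(h b, h a) \<notin> arcs (img h G)"
    proof
      assume "(h b, h a) \<in> arcs (img h G)"
      then obtain c d where cd: "(c,d) \<in> arcs G" "h c = h b" "h d = h a" by auto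
      have cv: "c \<in> verts G" "d \<in> verts G" using cd(1) sub by auto
      have "c = b" using inj_onD[OF inj cd(2) cv(1) av(2)] .
      moreover have "d = a" using inj_onD[OF inj cd(3) cv(2) av(1)] .
      ultimately show False using cd(1) nba by simp
    qed
    ultimately show "u \<noteq> v \<and> (v, u) \<notin> arcs (img h G)" using ab by simp
  qed
  let ?R = "arcs G \<union> (arcs G)\<inverse>" and ?R' = "arcs (img h G) \<union> (arcs (img h G))\<inverse>"
  have step1: "(h y, h z) \<in> ?R'" if "(y,z) \<in> ?R" for y z
  proof -
    have "(h y, h z) \<in> arcs (img h G) \<or> (h z, h y) \<in> arcs (img h G)"
      using that by (auto intro: rev_image_eqI)
    then show ?thesis by blast
  qed
  have lift: "(h a, h b) \<in> ?R'\<^sup>*" if "(a,b) \<in> ?R\<^sup>*" for a b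
    using that
  proof (induction b rule: rtrancl_induct)
    case (step y z)
    then show ?case using step1[OF step(2)] by (meson rtrancl.rtrancl_into_rtrancl)
  qed simp
  have conn: "\<forall>u\<in>verts (img h G). \<forall>v\<in>verts (img h G). (u, v) \<in> ?R'\<^sup>*"
  proof (intro ballI)
    fix u v assume "u \<in> verts (img h G)" "v \<in> verts (img h G)"
    then obtain a b where "a \<in> verts G" "b \<in> verts G" "u = h a" "v = h b" by auto
    then show "(u, v) \<in> ?R'\<^sup>*" using lift Tc by blast
  qed
  have "verts (img h G) \<noteq> {}" using Tn by simp
  then show ?thesis
    unfolding oriented_tree_def
    using digraph_img[OF dg] card loops conn by blast
qed


lemma hyp_tr:
  fixes G :: "nat digraph" and K :: "'b digraph"
  assumes dG: "digraph G" and hyp: "\<And>F :: nat digraph. oriented_tree F \<Longrightarrow> F \<rightarrow>\<^sub>h G \<Longrightarrow> F \<rightarrow>\<^sub>h K"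
    and h: "hom_at G t v"
  shows "\<exists>x. hom_at K t x"
proof -
  obtain f where f: "is_hom f (tdig t) G" using homA[OF h] by blast
  obtain e :: "nat list \<Rightarrow> nat" where e: "inj_on e (verts (tdig t))"
    using inj_nat[of "verts (tdig t)"] finite_tverts by auto
  have dT: "digraph (tdig t)" using tree_tdig[of t] by (simp add: oriented_tree_def)
  have T: "oriented_tree (img e (tdig t))" using tree_img[OF tree_tdig e] .
  have "is_hom (f \<circ> inv_into (verts (tdig t)) e) (img e (tdig t)) G"
    using hom_comp[OF hom_img_inv[OF dT e] f] .
  then have "img e (tdig t) \<rightarrow>\<^sub>h K" using hyp[OF T] by (auto simp: hom_to_def)
  then obtain g where "is_hom g (img e (tdig t)) K" by (auto simp: hom_to_def)
  then have "is_hom (g \<circ> e) (tdig t) K" using hom_comp[OF hom_img] by blast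
  then show ?thesis using homB by blast
qed

lemma finite_list_ex: "finite A \<Longrightarrow> \<exists>xs. set xs = A" using finite_list by blast

lemma PS_hom:
  fixes G :: "nat digraph" and K :: "'b digraph"
  assumes dG: "digraph G" and dK: "digraph K"
    and hyp: "\<And>F :: nat digraph. oriented_tree F \<Longrightarrow> F \<rightarrow>\<^sub>h G \<Longrightarrow> F \<rightarrow>\<^sub>h K"
  shows "\<exists>L. is_hom L G (PS K)"
proof -
  define L where "L v = {x \<in> verts K. \<forall>t. hom_at G t v \<longrightarrow> hom_at K t x}" for v
  have finK: "finite (verts K)" and subK: "arcs K \<subseteq> verts K \<times> verts K" using dK by (auto simp: digraph_def)
  have subG: "arcs G \<subseteq> verts G \<times> verts G" using dG by (auto simp: digraph_def)
  have ne: "L v \<noteq> {}" if v: "v \<in> verts G" for v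
  proof
    assume e: "L v = {}"
    have "\<forall>x. \<exists>t. x \<in> verts K \<longrightarrow> hom_at G t v \<and> \<not> hom_at K t x"
      using e unfolding L_def by blast
    from choice[OF this] obtain T where T0: "\<forall>x. x \<in> verts K \<longrightarrow> hom_at G (T x) v \<and> \<not> hom_at K (T x) x" by blast
    then have T: "\<And>x. x \<in> verts K \<Longrightarrow> hom_at G (T x) v \<and> \<not> hom_at K (T x) x" by blast
    obtain xs where xs: "set xs = verts K" using finite_list_ex[OF finK] by blast
    have "hom_at G (glue (map T xs)) v" using v T xs by (auto simp: hom_at_glue)
    then obtain x where "hom_at K (glue (map T xs)) x" using hyp_tr[OF dG hyp] by blast
    then show False using T xs by (auto simp: hom_at_glue)
  qed
  have fwd: "\<exists>y\<in>L w. (x,y) \<in> arcs K" if vw: "(v,w) \<in> arcs G" and x: "x \<in> L v" for v w x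
  proof (rule ccontr)
    assume "\<not> ?thesis"
    then have "\<forall>y. \<exists>t. (x,y) \<in> arcs K \<longrightarrow> hom_at G t w \<and> \<not> hom_at K t y"
      using subK unfolding L_def by blast
    from choice[OF this] obtain T where T0: "\<forall>y. (x,y) \<in> arcs K \<longrightarrow> hom_at G (T y) w \<and> \<not> hom_at K (T y) y" by blast
    then have T: "\<And>y. (x,y) \<in> arcs K \<Longrightarrow> hom_at G (T y) w \<and> \<not> hom_at K (T y) y" by blast
    have "finite {y. (x,y) \<in> arcs K}" using finK subK by (auto intro: finite_subset)
    then obtain ys where ys: "set ys = {y. (x,y) \<in> arcs K}" using finite_list_ex by blast
    define t where "t = Nd [(True, glue (map T ys))]"
    have vw': "v \<in> verts G" "w \<in> verts G" using vw subG by auto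
    have "hom_at G (glue (map T ys)) w" using vw' T ys by (auto simp: hom_at_glue)
    then have "hom_at G t v" using vw vw' by (auto simp: t_def)
    then have "hom_at K t x" using x unfolding L_def by blast
    then obtain y where "(x,y) \<in> arcs K" "hom_at K (glue (map T ys)) y" by (auto simp: t_def)
    then show False using T ys by (auto simp: hom_at_glue)
  qed
  have bwd: "\<exists>y\<in>L u. (y,x) \<in> arcs K" if uv: "(u,v) \<in> arcs G" and x: "x \<in> L v" for u v x
  proof (rule ccontr)
    assume "\<not> ?thesis"
    then have "\<forall>y. \<exists>t. (y,x) \<in> arcs K \<longrightarrow> hom_at G t u \<and> \<not> hom_at K t y"
      using subK unfolding L_def by blast
    from choice[OF this] obtain T where T0: "\<forall>y. (y,x) \<in> arcs K \<longrightarrow> hom_at G (T y) u \<and> \<not> hom_at K (T y) y" by blast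
    then have T: "\<And>y. (y,x) \<in> arcs K \<Longrightarrow> hom_at G (T y) u \<and> \<not> hom_at K (T y) y" by blast
    have "finite {y. (y,x) \<in> arcs K}" using finK subK by (auto intro: finite_subset)
    then obtain ys where ys: "set ys = {y. (y,x) \<in> arcs K}" using finite_list_ex by blast
    define t where "t = Nd [(False, glue (map T ys))]"
    have uv': "u \<in> verts G" "v \<in> verts G" using uv subG by auto
    have "hom_at G (glue (map T ys)) u" using uv' T ys by (auto simp: hom_at_glue)
    then have "hom_at G t v" using uv uv' by (auto simp: t_def)
    then have "hom_at K t x" using x unfolding L_def by blast
    then obtain y where "(y,x) \<in> arcs K" "hom_at K (glue (map T ys)) y" by (auto simp: t_def)
    then show False using T ys by (auto simp: hom_at_glue)
  qed
  have "is_hom L G (PS K)"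
    unfolding is_hom_def verts_PS arcs_PS
  proof (intro conjI allI impI ballI)
    fix v assume "v \<in> verts G" then show "L v \<in> {X. X \<subseteq> verts K \<and> X \<noteq> {}}"
      using ne by (auto simp: L_def)
  next
    fix u v assume uv: "(u,v) \<in> arcs G"
    then have "u \<in> verts G" "v \<in> verts G" using subG by auto
    then show "(L u, L v) \<in> {(X,Y). X \<subseteq> verts K \<and> X \<noteq> {} \<and> Y \<subseteq> verts K \<and> Y \<noteq> {} \<and>
     (\<forall>a\<in>X. \<exists>b\<in>Y. (a,b) \<in> arcs K) \<and> (\<forall>b\<in>Y. \<exists>a\<in>X. (a,b) \<in> arcs K)}"
      using ne fwd[OF uv] bwd[OF uv] by (auto simp: L_def)
  qed
  then show ?thesis by blast
qed

lemma step3: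
  fixes K :: "'b digraph"
  assumes dK: "digraph K" and psi: "is_hom \<psi> (PS K) K"
  shows "tree_duality K"
proof -
  define \<F> where "\<F> = {F :: nat digraph. oriented_tree F \<and> \<not> F \<rightarrow>\<^sub>h K}"
  have "complete_obstructions \<F> K"
    unfolding complete_obstructions_def
  proof (intro conjI allI impI)
    show "\<forall>F\<in>\<F>. digraph F" by (auto simp: \<F>_def oriented_tree_def)
  next
    fix G :: "nat digraph" assume dG: "digraph G"
    show "G \<rightarrow>\<^sub>h K = (\<not> (\<exists>F\<in>\<F>. F \<rightarrow>\<^sub>h G))"
    proof
      assume "G \<rightarrow>\<^sub>h K"
      then show "\<not> (\<exists>F\<in>\<F>. F \<rightarrow>\<^sub>h G)" unfolding \<F>_def hom_to_def using hom_comp by blast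
    next
      assume "\<not> (\<exists>F\<in>\<F>. F \<rightarrow>\<^sub>h G)"
      then have hyp: "\<And>F :: nat digraph. oriented_tree F \<Longrightarrow> F \<rightarrow>\<^sub>h G \<Longrightarrow> F \<rightarrow>\<^sub>h K"
        unfolding \<F>_def by blast
      obtain L where "is_hom L G (PS K)" using PS_hom[OF dG dK hyp] by blast
      then show "G \<rightarrow>\<^sub>h K" using hom_comp[OF _ psi] unfolding hom_to_def by blast
    qed
  qed
  moreover have "\<forall>F\<in>\<F>. oriented_tree F" by (simp add: \<F>_def)
  ultimately show ?thesis unfolding tree_duality_def by blast
qed


lemma verts_ag[simp]: "verts (arc_graph H) = arcs H"
  and arcs_ag[simp]: "arcs (arc_graph H) = {((u, v), (v', w)). (u, v) \<in> arcs H \<and> (v', w) \<in> arcs H \<and> v' = v}"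
  by (auto simp: arc_graph_def verts_def arcs_def)

lemma digraph_ag: "digraph H \<Longrightarrow> digraph (arc_graph H)"
  unfolding digraph_def by (auto intro: finite_subset)

lemma step2:
  assumes dH: "digraph H" and phi: "is_hom \<phi> (PS H) H"
  shows "is_hom (\<lambda>X. (\<phi> (fst ` X), \<phi> (snd ` X))) (PS (arc_graph H)) (arc_graph H)"
proof -
  have sub: "arcs H \<subseteq> verts H \<times> verts H" using dH by (simp add: digraph_def)
  have inA: "(\<phi> (fst ` X), \<phi> (snd ` X)) \<in> arcs H" if X: "X \<subseteq> arcs H" "X \<noteq> {}" for X
  proof -
    have "(fst ` X, snd ` X) \<in> arcs (PS H)"
      unfolding arcs_PS using X sub by force
    then show ?thesis using phi unfolding is_hom_def by blast
  qed
  show ?thesis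
    unfolding is_hom_def
  proof (intro conjI allI impI ballI)
    fix X assume "X \<in> verts (PS (arc_graph H))"
    then show "(\<phi> (fst ` X), \<phi> (snd ` X)) \<in> verts (arc_graph H)" using inA by (simp add: verts_PS)
  next
    fix X Y assume XY: "(X, Y) \<in> arcs (PS (arc_graph H))"
    then have X: "X \<subseteq> arcs H" "X \<noteq> {}" and Y: "Y \<subseteq> arcs H" "Y \<noteq> {}" by (auto simp: arcs_PS)
    have ab: "snd a = fst b" if "(a,b) \<in> arcs (arc_graph H)" for a b
      using that by (cases a, cases b) simp
    have f0: "\<forall>a\<in>X. \<exists>b\<in>Y. (a,b) \<in> arcs (arc_graph H)" and b0: "\<forall>b\<in>Y. \<exists>a\<in>X. (a,b) \<in> arcs (arc_graph H)"
      using XY unfolding arcs_PS by blast+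
    have f: "\<forall>a\<in>X. \<exists>b\<in>Y. snd a = fst b" using f0 ab by blast
    have b: "\<forall>b\<in>Y. \<exists>a\<in>X. snd a = fst b" using b0 ab by blast
    have "snd ` X = fst ` Y"
    proof
      show "snd ` X \<subseteq> fst ` Y" using f by force
      show "fst ` Y \<subseteq> snd ` X" using b by force
    qed
    then show "((\<phi> (fst ` X), \<phi> (snd ` X)), (\<phi> (fst ` Y), \<phi> (snd ` Y))) \<in> arcs (arc_graph H)"
      using inA[OF X] inA[OF Y] by simp
  qed
qed



lemma card_filter_sum: "finite A \<Longrightarrow> card {x\<in>A. P x} = (\<Sum>x\<in>A. if P x then 1 else (0::nat))"
  by (simp add: sum.inter_filter[symmetric])

lemma leaf_exists:
  assumes T: "oriented_tree F" and c: "card (verts F) \<ge> 2"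
  shows "\<exists>l\<in>verts F. \<exists>e\<in>arcs F. (fst e = l \<or> snd e = l) \<and> (\<forall>e'\<in>arcs F. (fst e' = l \<or> snd e' = l) \<longrightarrow> e' = e)"
proof (rule ccontr)
  assume nl: "\<not> ?thesis"
  let ?V = "verts F" and ?A = "arcs F"
  have finV: "finite ?V" and sub: "?A \<subseteq> ?V \<times> ?V" using T by (auto simp: oriented_tree_def digraph_def)
  have finA: "finite ?A" using finV sub by (meson finite_SigmaI finite_subset)
  have Tl: "\<And>u v. (u, v) \<in> ?A \<Longrightarrow> u \<noteq> v"
    and Tc: "\<And>u v. u \<in> ?V \<Longrightarrow> v \<in> ?V \<Longrightarrow> (u, v) \<in> (?A \<union> ?A\<inverse>)\<^sup>*"
    and Tcard: "card ?A + 1 = card ?V"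
    using T unfolding oriented_tree_def by blast+
  define inc where "inc v = {e\<in>?A. fst e = v \<or> snd e = v}" for v
  have incne: "inc v \<noteq> {}" if v: "v \<in> ?V" for v
  proof -
    have "card (?V - {v}) \<ge> 1" using c v finV by simp
    then have "?V - {v} \<noteq> {}" by (intro notI) simp
    then obtain w where w: "w \<in> ?V" "w \<noteq> v" by blast
    have "(v,w) \<in> (?A \<union> ?A\<inverse>)\<^sup>*" using Tc[OF v w(1)] .
    then obtain z where "(v,z) \<in> ?A \<union> ?A\<inverse>" using w(2) by (metis converse_rtranclE)
    then show ?thesis unfolding inc_def by force
  qed
  have ge2: "card (inc v) \<ge> 2" if v: "v \<in> ?V" for v
  proof -
    obtain e where e: "e \<in> inc v" using incne[OF v] by blast
    have "\<not> (\<forall>e'\<in>?A. (fst e' = v \<or> snd e' = v) \<longrightarrow> e' = e)" using nl v e unfolding inc_def by blast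
    then obtain e' where e': "e' \<in> inc v" "e' \<noteq> e" unfolding inc_def by blast
    have "finite (inc v)" using finA unfolding inc_def by simp
    then have "card {e, e'} \<le> card (inc v)" using e e' by (intro card_mono) auto
    then show ?thesis using e' by simp
  qed
  have ci: "card (inc v) = (\<Sum>e\<in>?A. (if fst e = v then 1 else 0) + (if snd e = v then 1 else 0))" for v
  proof -
    have "card (inc v) = (\<Sum>e\<in>?A. if fst e = v \<or> snd e = v then 1 else (0::nat))"
      unfolding inc_def by (rule card_filter_sum[OF finA])
    also have "\<dots> = (\<Sum>e\<in>?A. (if fst e = v then 1 else 0) + (if snd e = v then 1 else 0))"
    proof (rule sum.cong)
      fix e assume "e \<in> ?A" then have "fst e \<noteq> snd e" using Tl by (cases e) auto
      then show "(if fst e = v \<or> snd e = v then 1 else (0::nat)) = (if fst e = v then 1 else 0) + (if snd e = v then 1 else 0)"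
        by auto
    qed simp
    finally show ?thesis .
  qed
  have "(\<Sum>v\<in>?V. card (inc v)) = (\<Sum>e\<in>?A. \<Sum>v\<in>?V. (if fst e = v then 1 else 0) + (if snd e = v then 1 else (0::nat)))"
    unfolding ci by (rule sum.swap)
  also have "\<dots> = (\<Sum>e\<in>?A. 2)"
  proof (rule sum.cong)
    fix e assume "e \<in> ?A" then have "fst e \<in> ?V" "snd e \<in> ?V" using sub by auto
    then show "(\<Sum>v\<in>?V. (if fst e = v then 1 else 0) + (if snd e = v then 1 else (0::nat))) = 2"
      using finV by (simp add: sum.distrib)
  qed simp
  finally have s: "(\<Sum>v\<in>?V. card (inc v)) = 2 * card ?A" by simp
  have "(\<Sum>v\<in>?V. 2) \<le> (\<Sum>v\<in>?V. card (inc v))" by (rule sum_mono) (rule ge2)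
  then have "2 * card ?V \<le> 2 * card ?A" using s by simp
  then show False using Tcard by simp
qed



lemma leaf_remove:
  assumes T: "oriented_tree F" and c: "card (verts F) \<ge> 2" and l: "l \<in> verts F" and e: "e \<in> arcs F"
    and inc: "fst e = l \<or> snd e = l" and uniq: "\<forall>e'\<in>arcs F. (fst e' = l \<or> snd e' = l) \<longrightarrow> e' = e"
  shows "oriented_tree (verts F - {l}, arcs F - {e})"
proof -
  let ?V = "verts F" and ?A = "arcs F"
  let ?V' = "?V - {l}" and ?A' = "?A - {e}"
  have finV: "finite ?V" and sub: "?A \<subseteq> ?V \<times> ?V" using T by (auto simp: oriented_tree_def digraph_def)
  have finA: "finite ?A" using finV sub by (meson finite_SigmaI finite_subset)
  have Tl: "\<And>u v. (u, v) \<in> ?A \<Longrightarrow> u \<noteq> v \<and> (v, u) \<notin> ?A"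
    and Tc: "\<And>u v. u \<in> ?V \<Longrightarrow> v \<in> ?V \<Longrightarrow> (u, v) \<in> (?A \<union> ?A\<inverse>)\<^sup>*"
    and Tcard: "card ?A + 1 = card ?V"
    using T unfolding oriented_tree_def by blast+
  have vF: "verts (?V', ?A') = ?V'" and aF: "arcs (?V', ?A') = ?A'" by (simp_all add: verts_def arcs_def)
  define n where "n = (if fst e = l then snd e else fst e)"
  have nb: "(l,z) \<in> ?A \<union> ?A\<inverse> \<Longrightarrow> z = n" for z
    using uniq unfolding n_def by (cases e) force
  have nb2: "(z,l) \<in> ?A \<union> ?A\<inverse> \<Longrightarrow> z = n" for z
    using uniq unfolding n_def by (cases e) force
  have noloop: "(l,l) \<notin> ?A \<union> ?A\<inverse>" using Tl by blast
  have notl: "x \<noteq> l" "y \<noteq> l" if "(x,y) \<in> ?A'" for x y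
    using that uniq by fastforce+
  let ?R = "?A \<union> ?A\<inverse>" and ?R' = "?A' \<union> ?A'\<inverse>"
  have path: "(u,w) \<in> ?R\<^sup>* \<Longrightarrow> u \<noteq> l \<Longrightarrow> (w \<noteq> l \<longrightarrow> (u,w) \<in> ?R'\<^sup>*) \<and> (w = l \<longrightarrow> (u,n) \<in> ?R'\<^sup>*)" for u w
  proof (induction w rule: rtrancl_induct)
    case base then show ?case by simp
  next
    case (step y z)
    show ?case
    proof (cases "z = l")
      case True
      then have "y \<noteq> l" using step(2) noloop by blast
      moreover have "y = n" using nb2 step(2) True by blast
      ultimately show ?thesis using step(3,4) True by blast
    next
      case False
      show ?thesis
      proof (cases "y = l")
        case True
        then have "z = n" using nb step(2) by blast
        then show ?thesis using step(3,4) True False by blast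
      next
        case False2: False
        have "(y,z) \<in> ?R'"
        proof -
          have "(y,z) \<noteq> e" "(z,y) \<noteq> e" using inc False False2 by (cases e; auto)+
          then show ?thesis using step(2) by blast
        qed
        then have "(u,z) \<in> ?R'\<^sup>*" using step(3,4) False2 by (meson rtrancl.rtrancl_into_rtrancl)
        then show ?thesis using False by blast
      qed
    qed
  qed
  have dg: "digraph (?V', ?A')"
    unfolding digraph_def vF aF using finV sub notl by blast
  have ne: "?V' \<noteq> {}"
  proof
    assume "?V' = {}" then have "?V \<subseteq> {l}" by blast
    then have "card ?V \<le> 1" using card_mono[of "{l}"] by fastforce
    then show False using c by simp
  qed
  have cd: "card ?A' + 1 = card ?V'"
    using Tcard e l finA finV c by (simp add: card_Diff_singleton)
  have loops: "\<forall>u v. (u, v) \<in> ?A' \<longrightarrow> u \<noteq> v \<and> (v, u) \<notin> ?A'" using Tl by blast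
  have conn: "\<forall>u\<in>?V'. \<forall>v\<in>?V'. (u, v) \<in> ?R'\<^sup>*"
    using path Tc by blast
  show ?thesis unfolding oriented_tree_def vF aF using dg ne cd loops conn by (simp add: vF aF)
qed



lemma tree_PS:
  "oriented_tree F \<Longrightarrow> is_hom g F (PS H) \<Longrightarrow> \<exists>f. is_hom f F H \<and> (\<forall>v\<in>verts F. f v \<in> g v)"
proof (induction "card (verts F)" arbitrary: F rule: less_induct)
  case less
  note T = less.prems(1) and gh = less.prems(2)
  let ?V = "verts F" and ?A = "arcs F"
  have finV: "finite ?V" and sub: "?A \<subseteq> ?V \<times> ?V" and neV: "?V \<noteq> {}"
    using T by (auto simp: oriented_tree_def digraph_def)
  have finA: "finite ?A" using finV sub by (meson finite_SigmaI finite_subset)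
  have Tcard: "card ?A + 1 = card ?V" using T unfolding oriented_tree_def by blast
  have gv: "g v \<noteq> {} \<and> g v \<subseteq> verts H" if "v \<in> ?V" for v
    using gh that unfolding is_hom_def verts_PS by blast
  have ga: "(g u, g v) \<in> arcs (PS H)" if "(u,v) \<in> ?A" for u v
    using gh that unfolding is_hom_def by blast
  have "card ?V \<noteq> 0" using finV neV by simp
  then consider "card ?V = 1" | "card ?V \<ge> 2" by linarith
  then show ?case
  proof cases
    case 1
    then obtain v where V: "?V = {v}" using card_1_singletonE by blast
    have "?A = {}" using Tcard 1 finA by simp
    define a where "a = (SOME a. a \<in> g v)"
    have a: "a \<in> g v" using gv[of v] V unfolding a_def by (simp add: some_in_eq)
    have "is_hom (\<lambda>_. a) F H" unfolding is_hom_def using \<open>?A = {}\<close> a gv[of v] V by auto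
    then show ?thesis using a V by auto
  next
    case 2
    obtain l e where l: "l \<in> ?V" and e: "e \<in> ?A" and inc: "fst e = l \<or> snd e = l"
      and uniq: "\<forall>e'\<in>?A. (fst e' = l \<or> snd e' = l) \<longrightarrow> e' = e"
      using leaf_exists[OF T 2] by blast
    let ?F' = "(?V - {l}, ?A - {e})"
    have T': "oriented_tree ?F'" using leaf_remove[OF T 2 l e inc uniq] .
    have vF: "verts ?F' = ?V - {l}" and aF: "arcs ?F' = ?A - {e}" by (simp_all add: verts_def arcs_def)
    have lt: "card (verts ?F') < card ?V" using l finV vF 2 by (simp add: card_Diff1_less)
    have "is_hom g ?F' (PS H)" using gh unfolding is_hom_def vF aF by blast
    then obtain f' where f': "is_hom f' ?F' H" "\<forall>v\<in>?V - {l}. f' v \<in> g v"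
      using less.hyps[OF lt T'] vF by auto
    define n where "n = (if fst e = l then snd e else fst e)"
    have en: "e = (if fst e = l then (l, n) else (n, l))" using inc unfolding n_def by (cases e) auto
    have nl: "n \<noteq> l" using T e en unfolding oriented_tree_def by (metis (no_types, lifting))
    have nV: "n \<in> ?V" using e sub en by (auto split: if_splits)
    have fn: "f' n \<in> g n" using f'(2) nV nl by blast
    obtain a where a: "a \<in> g l" and arc: "(if fst e = l then (a, f' n) else (f' n, a)) \<in> arcs H"
    proof (cases "fst e = l")
      case True
      then have "(g l, g n) \<in> arcs (PS H)" using ga e en by (metis)
      then obtain a where "a \<in> g l" "(a, f' n) \<in> arcs H" using fn unfolding arcs_PS by blast
      then show ?thesis using that True by simp
    next
      case False
      then have "(g n, g l) \<in> arcs (PS H)" using ga e en by (metis)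
      then obtain a where "a \<in> g l" "(f' n, a) \<in> arcs H" using fn unfolding arcs_PS by blast
      then show ?thesis using that False by simp
    qed
    define f where "f = f'(l := a)"
    have fg: "\<forall>v\<in>?V. f v \<in> g v" using f'(2) a by (auto simp: f_def)
    have "is_hom f F H"
      unfolding is_hom_def
    proof (intro conjI allI impI ballI)
      fix v assume "v \<in> ?V" then show "f v \<in> verts H" using fg gv by blast
    next
      fix u v assume uv: "(u,v) \<in> ?A"
      show "(f u, f v) \<in> arcs H"
      proof (cases "(u,v) = e")
        case True
        then show ?thesis using arc en nl by (auto simp: f_def split: if_splits)
      next
        case False
        then have "u \<noteq> l" "v \<noteq> l" using uniq uv by fastforce+
        moreover have "(u,v) \<in> arcs ?F'" using uv False aF by simp
        ultimately show ?thesis using f'(1) unfolding is_hom_def f_def by simp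
      qed
    qed
    then show ?thesis using fg by blast
  qed
qed



lemma step1:
  fixes H :: "'a digraph"
  assumes dH: "digraph H" and td: "tree_duality H"
  shows "\<exists>\<phi>. is_hom \<phi> (PS H) H"
proof -
  obtain \<F> where tr: "\<forall>F\<in>\<F>. oriented_tree F" and co: "complete_obstructions \<F> H"
    using td unfolding tree_duality_def by blast
  have dF: "\<forall>F\<in>\<F>. digraph F" and cmp: "\<And>G :: nat digraph. digraph G \<Longrightarrow> (G \<rightarrow>\<^sub>h H \<longleftrightarrow> \<not> (\<exists>F\<in>\<F>. F \<rightarrow>\<^sub>h G))"
    using co unfolding complete_obstructions_def by blast+
  have dP: "digraph (PS H)" using digraph_PS[OF dH] .
  then have "finite (verts (PS H))" by (simp add: digraph_def)
  then obtain h :: "'a set \<Rightarrow> nat" where h: "inj_on h (verts (PS H))" using inj_nat by blast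
  have dG: "digraph (img h (PS H))" using digraph_img[OF dP] .
  show ?thesis
  proof (cases "img h (PS H) \<rightarrow>\<^sub>h H")
    case True
    then obtain k where "is_hom k (img h (PS H)) H" unfolding hom_to_def by blast
    then have "is_hom (k \<circ> h) (PS H) H" using hom_comp[OF hom_img] by blast
    then show ?thesis by blast
  next
    case False
    then obtain F where F: "F \<in> \<F>" "F \<rightarrow>\<^sub>h img h (PS H)" using cmp[OF dG] by blast
    then obtain s where "is_hom s F (img h (PS H))" unfolding hom_to_def by blast
    then have "is_hom (inv_into (verts (PS H)) h \<circ> s) F (PS H)" using hom_comp[OF _ hom_img_inv[OF dP h]] by blast
    then obtain f where "is_hom f F H" using tree_PS tr F(1) by blast
    then have "F \<rightarrow>\<^sub>h H" unfolding hom_to_def by blast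
    moreover have "F \<rightarrow>\<^sub>h F" unfolding hom_to_def using hom_refl by blast
    ultimately show ?thesis using cmp[of F] dF F(1) by blast
  qed
qed

theorem corollary2p4:
  fixes H :: "'a digraph"
  assumes "digraph H" and "tree_duality H"
  shows "tree_duality (arc_graph H)"
proof -
  obtain \<phi> where "is_hom \<phi> (PS H) H" using step1[OF assms] by blast
  from step2[OF assms(1) this] show ?thesis by (rule step3[OF digraph_ag[OF assms(1)]])
qed


end
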